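(* Let $(X,d)$ be a separable metric space and let $\mu$ be a finite nonatomic Radon measure on $X$ giving positive measure to each nonempty open set. Let $T$ be an invertible measure-preserving transformation of $(X,\mu)$ that is rigid. Then for every $\epsilon>0$ there exist a measurable set $B\subset X$ with $\mu(B)<\epsilon$ and a sequence of natural numbers $m_j\to\infty$ such that $\sup_{x\in X\setminus B} d(x,T^{m_j}x)\to 0$ as $j\to\infty$; that is, $T$ is uniformly rigid on $X\setminus B$.
   Context: $T$ is rigid if there is a sequence of natural numbers $n_k\to\infty$ such that $\mu(A\triangle T^{n_k}A)\to 0$ for every measurable $A$ of finite measure. For $Y\subset X$, $T$ is uniformly rigid on $Y$ if there is a sequence $m_j\to\infty$ with $d(y,T^{m_j}y)\to0$ uniformly in $y\in Y$. *)

theory Defs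
  imports "HOL-Analysis.Analysis"
begin

definition sym_diff :: "'a set \<Rightarrow> 'a set \<Rightarrow> 'a set" where
  "sym_diff A B = (A - B) \<union> (B - A)"

definition radon_measure :: "'a::metric_space measure \<Rightarrow> bool" where
  "radon_measure M \<longleftrightarrow> sets M = sets borel \<and>
     (\<forall>x. \<exists>U. open U \<and> x \<in> U \<and> emeasure M U < \<infinity>) \<and>
     (\<forall>A\<in>sets M. emeasure M A = (SUP K\<in>{K. compact K \<and> K \<subseteq> A}. emeasure M K))"

definition atom :: "'a measure \<Rightarrow> 'a set \<Rightarrow> bool" where
  "atom M A \<longleftrightarrow> A \<in> sets M \<and> emeasure M A > 0 \<and>
     (\<forall>B\<in>sets M. B \<subseteq> A \<longrightarrow> emeasure M B = 0 \<or> emeasure M B = emeasure M A)"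

definition nonatomic :: "'a measure \<Rightarrow> bool" where
  "nonatomic M \<longleftrightarrow> (\<nexists>A. atom M A)"

definition invertible_measure_preserving :: "'a measure \<Rightarrow> ('a \<Rightarrow> 'a) \<Rightarrow> bool" where
  "invertible_measure_preserving M T \<longleftrightarrow>
     bij_betw T (space M) (space M) \<and> T \<in> measurable M M \<and>
     the_inv_into (space M) T \<in> measurable M M \<and>
     (\<forall>A\<in>sets M. emeasure M (T -` A \<inter> space M) = emeasure M A)"

definition rigid :: "'a measure \<Rightarrow> ('a \<Rightarrow> 'a) \<Rightarrow> bool" where
  "rigid M T \<longleftrightarrow> (\<exists>n::nat \<Rightarrow> nat. filterlim n at_top sequentially \<and>
     (\<forall>A\<in>sets M. emeasure M A < \<infinity> \<longrightarrow>
        (\<lambda>k. measure M (sym_diff A ((T ^^ n k) ` A))) \<longlonglongrightarrow> 0))"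

definition uniformly_rigid_on :: "('a::metric_space \<Rightarrow> 'a) \<Rightarrow> 'a set \<Rightarrow> bool" where
  "uniformly_rigid_on T Y \<longleftrightarrow> (\<exists>m::nat \<Rightarrow> nat. filterlim m at_top sequentially \<and>
     (\<forall>e>0. \<forall>\<^sub>F j in sequentially. \<forall>y\<in>Y. dist y ((T ^^ m j) y) < e))"

end

theory Submission
  imports Defs
begin

lemma funpow_meas:
  assumes "T \<in> measurable M M"
  shows "(T ^^ n) \<in> measurable M M"
proof (induction n)
  case 0 then show ?case by simp
next
  case (Suc n)
  have "T \<circ> (T ^^ n) \<in> measurable M M" by (rule measurable_comp[OF Suc.IH assms])
  then show ?case by (simp only: funpow.simps(2))
qed

lemma funpow_pres:
  assumes "T \<in> measurable M M" "\<forall>A\<in>sets M. emeasure M (T -` A \<inter> space M) = emeasure M A"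
    and "space M = UNIV"
  shows "A \<in> sets M \<Longrightarrow> emeasure M ((T ^^ n) -` A) = emeasure M A"
proof (induction n arbitrary: A)
  case 0 then show ?case by simp
next
  case (Suc n)
  have "(T ^^ Suc n) -` A = (T ^^ n) -` (T -` A)" by (simp add: vimage_comp)
  moreover have "T -` A \<in> sets M" using measurable_sets[OF assms(1) Suc.prems] assms(3) by simp
  ultimately show ?case using Suc.IH assms(2) Suc.prems assms(3)
    by (simp only: funpow.simps(2)) simp
qed

lemma funpow_image_sets:
  assumes "bij T" "g \<in> measurable M M" "\<And>x. g (T x) = x" "\<And>x. T (g x) = x"
    and "space M = UNIV"
  shows "A \<in> sets M \<Longrightarrow> (T ^^ n) ` A \<in> sets M"
proof (induction n arbitrary: A)
  case 0 then show ?case by simp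
next
  case (Suc n)
  have e: "T ` S = g -` S" for S
  proof
    show "T ` S \<subseteq> g -` S" using assms(3) by auto
    show "g -` S \<subseteq> T ` S" using assms(4) by (metis image_eqI subsetI vimageE)
  qed
  have "(T ^^ Suc n) ` A = T ` ((T ^^ n) ` A)" by (simp only: funpow.simps(2) image_comp)
  then have "(T ^^ Suc n) ` A = g -` ((T ^^ n) ` A)" using e by simp
  then show ?case using measurable_sets[OF assms(2) Suc.IH[OF Suc.prems]] assms(5) by simp
qed

theorem mainTheorem9:
  fixes M :: "'a::metric_space measure" and T :: "'a \<Rightarrow> 'a" and \<epsilon> :: real
  assumes "separable_space (euclidean :: 'a topology)"
    and "finite_measure M"
    and "radon_measure M"
    and "nonatomic M"
    and "\<And>U. open U \<Longrightarrow> U \<noteq> {} \<Longrightarrow> emeasure M U > 0"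
    and "invertible_measure_preserving M T"
    and "rigid M T"
    and "\<epsilon> > 0"
  shows "\<exists>B\<in>sets M. measure M B < \<epsilon> \<and> uniformly_rigid_on T (space M - B)"
proof -
  interpret finite_measure M by fact
  have sM: "sets M = sets borel" using assms(3) unfolding radon_measure_def by blast
  have spM: "space M = UNIV" using sets_eq_imp_space_eq[OF sM] by simp
  have bijT: "bij T" and Tm: "T \<in> measurable M M"
    and gm: "the_inv_into UNIV T \<in> measurable M M"
    and mp: "\<forall>A\<in>sets M. emeasure M (T -` A \<inter> space M) = emeasure M A"
    using assms(6) spM unfolding invertible_measure_preserving_def by auto
  define g where "g = the_inv_into UNIV T"
  have injT: "inj T" using bijT bij_is_inj by blast
  have g1: "g (T x) = x" for x unfolding g_def using the_inv_into_f_f[OF injT] by simp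
  have g2: "T (g x) = x" for x unfolding g_def using f_the_inv_into_f[OF injT] bijT
    by (simp add: bij_is_surj)
  have gm': "g \<in> measurable M M" using gm g_def by simp
  have img: "A \<in> sets M \<Longrightarrow> (T ^^ n) ` A \<in> sets M" for A n
    using funpow_image_sets[OF bijT gm' g1 g2 spM] by blast
  have vim: "A \<in> sets M \<Longrightarrow> (T ^^ n) -` A \<in> sets M" for A n
    using measurable_sets[OF funpow_meas[OF Tm]] spM by (metis inf_top.right_neutral)
  have pres: "A \<in> sets M \<Longrightarrow> measure M ((T ^^ n) -` A) = measure M A" for A n
    using funpow_pres[OF Tm mp spM] by (simp add: measure_def)
  have injn: "inj (T ^^ n)" for n using bij_betw_funpow[OF bijT] bij_is_inj by blast
  have swap: "U \<in> sets M \<Longrightarrow> measure M (U - (T ^^ n) -` U) = measure M ((T ^^ n) ` U - U)" for U n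
  proof -
    assume U: "U \<in> sets M"
    have "(T ^^ n) -` ((T ^^ n) ` U - U) = U - (T ^^ n) -` U"
      using injn[of n] by (auto simp: inj_def)
    then show ?thesis using pres[of "(T ^^ n) ` U - U" n] img[OF U] U by auto
  qed
  obtain n :: "nat \<Rightarrow> nat" where nlim: "filterlim n at_top sequentially" and
    rig: "\<forall>A\<in>sets M. emeasure M A < \<infinity> \<longrightarrow>
        (\<lambda>k. measure M (sym_diff A ((T ^^ n k) ` A))) \<longlonglongrightarrow> 0"
    using assms(7) unfolding rigid_def by blast
  have conv: "U \<in> sets M \<Longrightarrow> (\<lambda>k. measure M ((T ^^ n k) ` U - U)) \<longlonglongrightarrow> 0" for U
  proof -
    assume U: "U \<in> sets M"
    have t: "(\<lambda>k. measure M (sym_diff U ((T ^^ n k) ` U))) \<longlonglongrightarrow> 0"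
      using rig U by (simp add: less_top[symmetric])
    show ?thesis
    proof (rule tendsto_sandwich[OF _ _ tendsto_const t])
      show "\<forall>\<^sub>F k in sequentially. 0 \<le> measure M ((T ^^ n k) ` U - U)" by simp
      show "\<forall>\<^sub>F k in sequentially. measure M ((T ^^ n k) ` U - U) \<le> measure M (sym_diff U ((T ^^ n k) ` U))"
      proof (intro always_eventually allI finite_measure_mono)
        fix k
        show "(T ^^ n k) ` U - U \<subseteq> sym_diff U ((T ^^ n k) ` U)"
          unfolding Defs.sym_diff_def by blast
        show "sym_diff U ((T ^^ n k) ` U) \<in> sets M"
          unfolding Defs.sym_diff_def using U img[OF U] by (intro sets.Un sets.Diff)
      qed
    qed
  qed
  obtain C :: "'a set" where Cc: "countable C" and Cd: "closure C = UNIV"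
    using assms(1) unfolding separable_space_def by auto
  have Cne: "C \<noteq> {}" using Cd by auto
  define c where "c = from_nat_into C"
  have rc: "range c = C" using Cne Cc c_def by simp
  have key: "\<exists>K. \<forall>k\<ge>K. \<exists>G\<in>sets M. measure M (space M - G) < \<eta> \<and> (\<forall>x\<in>G. dist x ((T ^^ n k) x) < \<delta>)"
    if dp: "\<delta> > 0" and ep: "\<eta> > 0" for \<delta> \<eta> :: real
  proof -
    define U where "U i = ball (c i) (\<delta>/2)" for i
    have Us: "U i \<in> sets M" for i using sM U_def by simp
    have cov: "\<exists>i. x \<in> U i" for x
    proof -
      have "x \<in> closure C" using Cd by simp
      then obtain y where "y \<in> C" "dist y x < \<delta>/2" using closure_approachable[of x C] dp
        by (meson half_gt_zero)
      then show ?thesis using rc U_def by auto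
    qed
    define V where "V N = (\<Union>i<N. U i)" for N
    have Vs: "V N \<in> sets M" for N using Us V_def by auto
    have Vinc: "incseq V" unfolding V_def incseq_def by (auto intro: order_less_le_trans)
    have VU: "(\<Union>N. V N) = space M"
    proof -
      have "x \<in> (\<Union>N. V N)" for x
      proof -
        obtain i where "x \<in> U i" using cov by blast
        then have "x \<in> V (Suc i)" unfolding V_def by auto
        then show ?thesis by blast
      qed
      then show ?thesis using spM by auto
    qed
    have "(\<lambda>N. measure M (V N)) \<longlonglongrightarrow> measure M (space M)"
      using finite_Lim_measure_incseq[OF _ Vinc] Vs VU by auto
    then have "\<forall>\<^sub>F N in sequentially. measure M (space M) - \<eta>/2 < measure M (V N)"
      using ep by (intro order_tendstoD(1)) auto
    then obtain N where N: "measure M (space M) - \<eta>/2 < measure M (V N)"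
      by (meson eventually_sequentially order_refl)
    have N': "measure M (space M - V N) < \<eta>/2" using N finite_measure_compl[OF Vs] by simp
    have "(\<lambda>k. \<Sum>i<N. measure M ((T ^^ n k) ` U i - U i)) \<longlonglongrightarrow> (\<Sum>i<N. 0)"
      using conv Us by (intro tendsto_sum) auto
    then have "\<forall>\<^sub>F k in sequentially. (\<Sum>i<N. measure M ((T ^^ n k) ` U i - U i)) < \<eta>/2"
      using ep by (intro order_tendstoD(2)) auto
    then obtain K where K: "\<And>k. k \<ge> K \<Longrightarrow> (\<Sum>i<N. measure M ((T ^^ n k) ` U i - U i)) < \<eta>/2"
      by (auto simp: eventually_sequentially)
    show ?thesis
    proof (intro exI allI impI)
      fix k assume kK: "k \<ge> K"
      define G where "G = (\<Union>i<N. U i \<inter> (T ^^ n k) -` U i)"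
      have Gs: "G \<in> sets M" unfolding G_def using Us vim by auto
      have sub: "space M - G \<subseteq> (space M - V N) \<union> (\<Union>i<N. U i - (T ^^ n k) -` U i)"
        unfolding G_def V_def by auto
      have Ws: "(\<Union>i<N. U i - (T ^^ n k) -` U i) \<in> sets M" using Us vim by auto
      have "measure M (space M - G) \<le> measure M ((space M - V N) \<union> (\<Union>i<N. U i - (T ^^ n k) -` U i))"
        using sub Ws Vs by (intro finite_measure_mono) auto
      also have "\<dots> \<le> measure M (space M - V N) + measure M (\<Union>i<N. U i - (T ^^ n k) -` U i)"
        using Ws Vs by (intro measure_Un_le) auto
      also have "measure M (\<Union>i<N. U i - (T ^^ n k) -` U i) \<le> (\<Sum>i<N. measure M (U i - (T ^^ n k) -` U i))"
        using Us vim by (intro finite_measure_subadditive_finite) auto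
      also have "\<dots> = (\<Sum>i<N. measure M ((T ^^ n k) ` U i - U i))"
        using swap Us by simp
      finally have "measure M (space M - G) < \<eta>" using N' K[OF kK] by simp
      moreover have "\<forall>x\<in>G. dist x ((T ^^ n k) x) < \<delta>"
      proof
        fix x assume "x \<in> G"
        then obtain i where "x \<in> U i" "(T ^^ n k) x \<in> U i" unfolding G_def by auto
        then have "dist (c i) x < \<delta>/2" "dist (c i) ((T ^^ n k) x) < \<delta>/2" unfolding U_def by auto
        moreover have "dist x ((T ^^ n k) x) \<le> dist x (c i) + dist (c i) ((T ^^ n k) x)"
          by (rule dist_triangle)
        ultimately show "dist x ((T ^^ n k) x) < \<delta>" by (simp add: dist_commute)
      qed
      ultimately show "\<exists>G\<in>sets M. measure M (space M - G) < \<eta> \<and> (\<forall>x\<in>G. dist x ((T ^^ n k) x) < \<delta>)"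
        using Gs by blast
    qed
  qed
  have "\<forall>j. \<exists>K. \<forall>k\<ge>K. \<exists>G\<in>sets M. measure M (space M - G) < \<epsilon> / 2^(j+2) \<and>
      (\<forall>x\<in>G. dist x ((T ^^ n k) x) < 1 / real (Suc j))"
    using key assms(8) by simp
  then have "\<exists>K. \<forall>j. \<forall>k\<ge>K j. \<exists>G\<in>sets M. measure M (space M - G) < \<epsilon> / 2^(j+2) \<and>
      (\<forall>x\<in>G. dist x ((T ^^ n k) x) < 1 / real (Suc j))" by (rule choice)
  then obtain K where K: "\<And>j k. k \<ge> K j \<Longrightarrow> \<exists>G\<in>sets M. measure M (space M - G) < \<epsilon> / 2^(j+2) \<and>
      (\<forall>x\<in>G. dist x ((T ^^ n k) x) < 1 / real (Suc j))"
    by blast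
  define kk where "kk j = max (K j) j" for j
  define m where "m j = n (kk j)" for j
  have "\<forall>j. \<exists>G. G \<in> sets M \<and> measure M (space M - G) < \<epsilon> / 2^(j+2) \<and>
      (\<forall>x\<in>G. dist x ((T ^^ m j) x) < 1 / real (Suc j))"
  proof
    fix j
    have "kk j \<ge> K j" unfolding kk_def by simp
    from K[OF this] show "\<exists>G. G \<in> sets M \<and> measure M (space M - G) < \<epsilon> / 2^(j+2) \<and>
      (\<forall>x\<in>G. dist x ((T ^^ m j) x) < 1 / real (Suc j))" unfolding m_def by blast
  qed
  then have "\<exists>G. \<forall>j. G j \<in> sets M \<and> measure M (space M - G j) < \<epsilon> / 2^(j+2) \<and>
      (\<forall>x\<in>G j. dist x ((T ^^ m j) x) < 1 / real (Suc j))" by (rule choice)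
  then obtain G where Gs: "\<And>j. G j \<in> sets M" and Gm: "\<And>j. measure M (space M - G j) < \<epsilon> / 2^(j+2)"
    and Gd: "\<And>j x. x \<in> G j \<Longrightarrow> dist x ((T ^^ m j) x) < 1 / real (Suc j)"
    by blast
  define B where "B = (\<Union>j. space M - G j)"
  have Bs: "B \<in> sets M" using Gs B_def by auto
  have geo: "(\<lambda>j. \<epsilon> / 2^(j+2)) sums (\<epsilon> / 2)"
  proof -
    have "(\<lambda>j. (\<epsilon>/4) * (1/2)^j) sums ((\<epsilon>/4) * (1 / (1 - 1/2)))"
      by (intro sums_mult geometric_sums) auto
    moreover have "(\<lambda>j. (\<epsilon>/4) * (1/2::real)^j) = (\<lambda>j. \<epsilon> / 2^(j+2))"
      by (rule ext) (simp add: power_add power_one_over)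
    ultimately show ?thesis by simp
  qed
  have summ: "summable (\<lambda>j. measure M (space M - G j))"
    by (rule summable_comparison_test[OF _ sums_summable[OF geo]])
      (use less_imp_le[OF Gm] in \<open>auto intro!: exI[of _ 0]\<close>)
  have "measure M B \<le> (\<Sum>j. measure M (space M - G j))"
    unfolding B_def using Gs summ by (intro finite_measure_subadditive_countably) auto
  also have "\<dots> \<le> (\<Sum>j. \<epsilon> / 2^(j+2))"
    by (rule suminf_le[OF less_imp_le[OF Gm] summ sums_summable[OF geo]])
  also have "\<dots> = \<epsilon>/2" by (rule sums_unique[OF geo, symmetric])
  finally have Bm: "measure M B < \<epsilon>" using assms(8) by simp
  have klim: "filterlim kk at_top sequentially"
    unfolding filterlim_at_top eventually_sequentially kk_def
  proof (intro allI)
    fix Z show "\<exists>N. \<forall>j\<ge>N. Z \<le> max (K j) j" by (rule exI[of _ Z]) auto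
  qed
  have mlim: "filterlim m at_top sequentially"
    unfolding m_def using filterlim_compose[OF nlim klim] by (simp add: comp_def)
  have "uniformly_rigid_on T (space M - B)"
    unfolding uniformly_rigid_on_def
  proof (intro exI conjI allI impI)
    show "filterlim m at_top sequentially" by fact
    fix e :: real assume "e > 0"
    then obtain J where J: "inverse (real (Suc J)) < e" using reals_Archimedean by blast
    show "\<forall>\<^sub>F j in sequentially. \<forall>y\<in>space M - B. dist y ((T ^^ m j) y) < e"
      unfolding eventually_sequentially
    proof (intro exI allI impI ballI)
      fix j y assume jJ: "J \<le> j" and y: "y \<in> space M - B"
      have "y \<in> G j" using y B_def by auto
      then have "dist y ((T ^^ m j) y) < 1 / real (Suc j)" by (rule Gd)
      also have "\<dots> \<le> inverse (real (Suc J))" using jJ by (simp add: divide_inverse frac_le)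
      finally show "dist y ((T ^^ m j) y) < e" using J by simp
    qed
  qed
  then show ?thesis using Bs Bm by blast
qed

end
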